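(* Let $K$ be the fractal percolation on $[0,1]$ with parameters $M\in\mathbb{N}_{\geq2}$ and $p\in[0,1]$, with construction steps $K_n$. Then for any $n\in\mathbb{N}_0$, $$\mathbb{E}V_1(K_n)=p^n,\qquad \mathbb{E}V_0(K_n)=(Mp)^n\left(1-\frac{(M-1)p}{M-p}\left[1-\left(\frac pM\right)^n\right]\right).$$
   Context: Fractal percolation on $[0,1]$: $K_0=[0,1]$; given $K_{n-1}$, a union of closed intervals $[iM^{-(n-1)},(i+1)M^{-(n-1)}]$, each such interval is divided into $M$ closed subintervals of length $M^{-n}$, each kept independently (of everything else) with probability $p$; $K_n$ is the union of kept subintervals. $V_1$ is length and $V_0$ the Euler characteristic (number of connected components) of a finite union of compact intervals. *)

theory Defs
  imports "HOL-Probability.Probability"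
begin

text \<open>The randomness is a family of independent
Bernoulli(p) coins indexed by pairs (k, i): the coin omega (k, i) decides whether the
i-th M-adic interval of level k (k >= 1, i < M^k) is kept. Coordinates outside this
range are unused.\<close>

definition fp_space :: "real \<Rightarrow> (nat \<times> nat \<Rightarrow> bool) measure" where
  "fp_space p = PiM UNIV (\<lambda>_. measure_pmf (bernoulli_pmf p))"

text \<open>The level-n interval i survives to K_n iff it and all its ancestors were kept.\<close>
definition fp_survives :: "nat \<Rightarrow> (nat \<times> nat \<Rightarrow> bool) \<Rightarrow> nat \<Rightarrow> nat \<Rightarrow> bool" where
  "fp_survives M \<omega> n i = (\<forall>k\<in>{1..n}. \<omega> (k, i div M ^ (n - k)))"

definition fp_K :: "nat \<Rightarrow> (nat \<times> nat \<Rightarrow> bool) \<Rightarrow> nat \<Rightarrow> real set" where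
  "fp_K M \<omega> n = (\<Union>i\<in>{i. i < M ^ n \<and> fp_survives M \<omega> n i}.
        {real i / real M ^ n .. (real i + 1) / real M ^ n})"

definition V1 :: "real set \<Rightarrow> real" where
  "V1 S = measure lborel S"

definition V0 :: "real set \<Rightarrow> real" where
  "V0 S = real (card (components S))"

end

theory Submission
  imports Defs
begin


lemma comps_card:
  fixes c :: real and U :: "nat set"
  assumes c: "c > 0" and fin: "finite U"
  shows "card (components (\<Union>i\<in>U. {real i / c .. (real i + 1) / c})) = card {i\<in>U. i = 0 \<or> i - 1 \<notin> U}"
proof -
  define S where "S = (\<Union>i\<in>U. {real i / c .. (real i + 1) / c})"
  define L where "L = {i\<in>U. i = 0 \<or> i - 1 \<notin> U}"
  have gap: "y \<notin> S" if j: "j \<ge> 1" "j - 1 \<notin> U" "real (j - 1) / c < y" "y < real j / c" for j y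
  proof
    assume "y \<in> S"
    then obtain i where i: "i \<in> U" "real i / c \<le> y" "y \<le> (real i + 1) / c" unfolding S_def by auto
    have a: "real i \<le> y * c" using i(2) c by (simp add: pos_divide_le_eq)
    have b: "y * c < real j" using j(4) c by (simp add: pos_less_divide_eq)
    have "i < j" using a b by linarith
    moreover have "i \<noteq> j - 1" using i(1) j(2) by auto
    ultimately have "real i + 1 \<le> real (j - 1)" using j(1) by linarith
    hence "(real i + 1) / c \<le> real (j - 1) / c" using c by (simp add: divide_right_mono)
    thus False using i(3) j(3) by linarith
  qed
  have inS: "real i / c \<in> S" if "i \<in> U" for i
    unfolding S_def using that c by (auto intro!: bexI[of _ i] simp: divide_right_mono)
  have isint: "is_interval (connected_component_set S x)" for x
    using connected_connected_component is_interval_connected_1 by blast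
  define g where "g i = connected_component_set S (real i / c)" for i
  have inj: "inj_on g L"
  proof -
    have *: False if ij: "i \<in> L" "j \<in> L" "i < j" "g i = g j" for i j
    proof -
      have jU: "j \<in> U" "i \<in> U" using ij L_def by auto
      have "real j / c \<in> g i" using ij(4) inS[OF jU(1)] unfolding g_def
        by (metis connected_component_refl mem_Collect_eq)
      moreover have "real i / c \<in> g i" using inS[OF jU(2)] unfolding g_def
        by (metis connected_component_refl mem_Collect_eq)
      moreover have j1: "j \<ge> 1" "j - 1 \<notin> U" using ij L_def by auto
      define y where "y = (real j - 1/2) / c"
      have "real i \<le> real j - 1/2" using ij(3) by linarith
      hence "real i / c \<le> y" using c unfolding y_def by (simp add: divide_right_mono)
      moreover have "y \<le> real j / c" using c unfolding y_def by (simp add: divide_right_mono)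
      ultimately have "y \<in> g i" using isint[of "real i / c"] unfolding is_interval_1 g_def by blast
      hence "y \<in> S" unfolding g_def using connected_component_subset by blast
      moreover have "real (j - 1) / c < y" "y < real j / c" using c j1(1) unfolding y_def
        by (simp_all add: divide_strict_right_mono of_nat_diff)
      ultimately show False using gap[OF j1] by blast
    qed
    show ?thesis unfolding inj_on_def by (metis * linorder_neqE_nat)
  qed
  have img: "g ` L = components S"
  proof
    show "g ` L \<subseteq> components S" unfolding components_def g_def L_def using inS by auto
  next
    show "components S \<subseteq> g ` L"
    proof
      fix C assume "C \<in> components S"
      then obtain x where x: "x \<in> S" "C = connected_component_set S x" unfolding components_def by auto
      then obtain k where k: "k \<in> U" "real k / c \<le> x" "x \<le> (real k + 1) / c" unfolding S_def by auto
      define P where "P i = (i \<le> k \<and> (\<forall>j. i \<le> j \<and> j \<le> k \<longrightarrow> j \<in> U))" for i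
      define i where "i = (LEAST i. P i)"
      have Pk: "P k" using k(1) unfolding P_def by auto
      have Pi: "P i" unfolding i_def using Pk by (rule LeastI)
      have iU: "i \<in> U" using Pi unfolding P_def by auto
      have iL: "i \<in> L"
      proof (rule ccontr)
        assume "i \<notin> L"
        hence "i \<ge> 1" "i - 1 \<in> U" using iU L_def by auto
        have "P (i - 1)" unfolding P_def
        proof (intro conjI allI impI)
          show "i - 1 \<le> k" using Pi P_def by auto
          fix j assume j: "i - 1 \<le> j \<and> j \<le> k"
          show "j \<in> U"
          proof (cases "j = i - 1")
            case True thus ?thesis using \<open>i - 1 \<in> U\<close> by simp
          next
            case False hence "i \<le> j" using j by linarith
            thus ?thesis using Pi j P_def by auto
          qed
        qed
        moreover have "i - 1 < i" using \<open>i \<ge> 1\<close> by simp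
        ultimately show False unfolding i_def using not_less_Least by blast
      qed
      define T where "T = {real i / c .. (real k + 1) / c}"
      have TS: "T \<subseteq> S"
      proof
        fix y assume "y \<in> T"
        hence y: "real i \<le> y * c" "y * c \<le> real k + 1" unfolding T_def using c
          by (auto simp: pos_divide_le_eq pos_le_divide_eq)
        show "y \<in> S"
        proof (cases "y * c \<ge> real k")
          case True
          thus ?thesis using k(1) y(2) c unfolding S_def
            by (auto intro!: bexI[of _ k] simp: pos_divide_le_eq pos_le_divide_eq)
        next
          case False
          define j where "j = nat \<lfloor>y * c\<rfloor>"
          have yc0: "y * c \<ge> 0" using y(1) by linarith
          have jr: "real j \<le> y * c" "y * c < real j + 1" unfolding j_def using yc0
            by (simp_all add: of_nat_nat)
          have "i \<le> j" using jr y(1) by linarith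
          moreover have "j \<le> k" using jr False by linarith
          ultimately have "j \<in> U" using Pi unfolding P_def by auto
          thus ?thesis using jr c unfolding S_def
            by (auto intro!: bexI[of _ j] simp: pos_divide_le_eq pos_le_divide_eq)
        qed
      qed
      have "i \<le> k" using Pi P_def by auto
      hence "real i / c \<le> x" using k(2) c
        by (meson divide_right_mono less_le_not_le of_nat_le_iff order.trans)
      hence "x \<in> T" using k(3) unfolding T_def by auto
      moreover have "real i / c \<in> T" unfolding T_def using \<open>i \<le> k\<close> c
        by (auto simp: divide_right_mono)
      ultimately have "x \<in> g i" unfolding g_def using TS
        by (metis connected_Icc T_def connected_componentI mem_Collect_eq)
      hence "g i = C" unfolding g_def x(2) by (metis connected_component_eq)
      thus "C \<in> g ` L" using iL by blast
    qed
  qed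
  have "bij_betw g L (components S)" using inj img unfolding bij_betw_def by auto
  hence "card L = card (components S)" by (rule bij_betw_same_card)
  thus ?thesis unfolding S_def L_def by simp
qed

lemma meas_union:
  fixes c :: real and U :: "nat set"
  assumes c: "c > 0" and fin: "finite U"
  shows "measure lborel (\<Union>i\<in>U. {real i / c .. (real i + 1) / c}) = real (card U) / c"
proof -
  define f where "f i = {real i / c .. (real i + 1) / c}" for i
  have "(\<Union>i\<in>U. f i) \<in> sets lborel" unfolding f_def by auto
  hence "measure lborel (\<Union>i\<in>U. f i) = measure lebesgue (\<Union>i\<in>U. f i)" by simp
  also have "\<dots> = (\<Sum>i\<in>U. measure lebesgue (f i))"
  proof (rule measure_negligible_finite_Union_image[OF fin])
    show "f i \<in> lmeasurable" for i unfolding f_def by simp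
    show "pairwise (\<lambda>x y. negligible (f x \<inter> f y)) U"
    proof (rule pairwiseI)
      fix x y assume "x \<in> U" "y \<in> U" "x \<noteq> y"
      have "f x \<inter> f y \<subseteq> {real (max x y) / c}"
      proof
        fix z assume z: "z \<in> f x \<inter> f y"
        hence z': "real x \<le> z * c" "z * c \<le> real x + 1" "real y \<le> z * c" "z * c \<le> real y + 1"
          unfolding f_def using c by (auto simp: pos_divide_le_eq pos_le_divide_eq)
        have "z * c = real (max x y)" using z' \<open>x \<noteq> y\<close> by (cases "x < y") (auto simp: max_def)
        thus "z \<in> {real (max x y) / c}" using c by (simp add: eq_divide_eq)
      qed
      thus "negligible (f x \<inter> f y)" using negligible_subset negligible_sing by blast
    qed
  qed
  also have "\<dots> = (\<Sum>i\<in>U. 1 / c)"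
  proof (rule sum.cong)
    fix i assume "i \<in> U"
    have "f i \<in> sets lborel" unfolding f_def by simp
    hence "measure lebesgue (f i) = measure lborel (f i)" by simp
    also have "\<dots> = (real i + 1) / c - real i / c" unfolding f_def using c by (simp add: divide_right_mono)
    also have "\<dots> = 1 / c" by (simp add: add_divide_distrib)
    finally show "measure lebesgue (f i) = 1 / c" .
  qed simp
  finally show ?thesis unfolding f_def by simp
qed



definition anc :: "nat \<Rightarrow> nat \<Rightarrow> nat \<Rightarrow> (nat \<times> nat) set" where
  "anc M n i = (\<lambda>k. (k, i div M ^ (n - k))) ` {1..n}"

definition dd :: "nat \<Rightarrow> nat \<Rightarrow> nat \<Rightarrow> nat" where
  "dd M n i = card {k\<in>{1..n}. M ^ (n - k) dvd i}"

lemma surv_anc: "fp_survives M \<omega> n i \<longleftrightarrow> (\<forall>a\<in>anc M n i. \<omega> a)"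
  by (auto simp: fp_survives_def anc_def)

lemma card_anc: "card (anc M n i) = n"
  unfolding anc_def by (subst card_image) (auto simp: inj_on_def)

lemma finite_anc: "finite (anc M n i)"
  unfolding anc_def by simp

lemma div_pred:
  fixes d i :: nat
  assumes "0 < d" "1 \<le> i"
  shows "((i - 1) div d = i div d) \<longleftrightarrow> \<not> d dvd i"
proof -
  obtain j where j: "i = Suc j" using assms(2) by (cases i) auto
  have h: "Suc j div d = (if Suc j mod d = 0 then Suc (j div d) else j div d)" by (rule div_Suc)
  show ?thesis
  proof (cases "d dvd Suc j")
    case True
    hence "Suc j mod d = 0" by (simp only: dvd_eq_mod_eq_0)
    hence "Suc j div d = Suc (j div d)" using h by metis
    thus ?thesis using True j by simp
  next
    case False
    hence "Suc j mod d \<noteq> 0" by (metis dvd_eq_mod_eq_0)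
    hence "Suc j div d = j div d" using h by metis
    thus ?thesis using False j by simp
  qed
qed

lemma card_union_anc:
  assumes M: "0 < M" and i: "1 \<le> i"
  shows "card (anc M n i \<union> anc M n (i - 1)) = n + dd M n i"
proof -
  define D where "D = {k\<in>{1..n}. M ^ (n - k) dvd i}"
  define G where "G = (\<lambda>k. (k, (i - 1) div M ^ (n - k))) ` D"
  have pos: "0 < M ^ m" for m using M by simp
  have eq: "anc M n i \<union> anc M n (i - 1) = anc M n i \<union> G"
  proof
    show "anc M n i \<union> anc M n (i - 1) \<subseteq> anc M n i \<union> G"
    proof
      fix a assume "a \<in> anc M n i \<union> anc M n (i - 1)"
      moreover have "a \<in> anc M n i \<union> G" if "a \<in> anc M n (i - 1)"
      proof -
        from that obtain k where k: "k \<in> {1..n}" "a = (k, (i - 1) div M ^ (n - k))"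
          unfolding anc_def by auto
        show ?thesis
        proof (cases "M ^ (n - k) dvd i")
          case True thus ?thesis using k unfolding G_def D_def by auto
        next
          case False
          hence "(i - 1) div M ^ (n - k) = i div M ^ (n - k)" using div_pred[OF pos i] by blast
          thus ?thesis using k unfolding anc_def by auto
        qed
      qed
      ultimately show "a \<in> anc M n i \<union> G" by blast
    qed
    have "G \<subseteq> anc M n (i - 1)" unfolding G_def anc_def D_def by (rule image_mono) blast
    thus "anc M n i \<union> G \<subseteq> anc M n i \<union> anc M n (i - 1)" by blast
  qed
  have disj: "anc M n i \<inter> G = {}"
  proof (rule ccontr)
    assume "anc M n i \<inter> G \<noteq> {}"
    then obtain a where a: "a \<in> anc M n i" "a \<in> G" by blast
    from a(1) obtain k where k: "k \<in> {1..n}" "a = (k, i div M ^ (n - k))" unfolding anc_def by blast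
    from a(2) obtain k' where k': "k' \<in> D" "a = (k', (i - 1) div M ^ (n - k'))" unfolding G_def by blast
    have kk: "k' = k" "i div M ^ (n - k) = (i - 1) div M ^ (n - k)" using k(2) k'(2) by auto
    have "M ^ (n - k) dvd i" using k'(1) kk(1) unfolding D_def by blast
    hence "(i - 1) div M ^ (n - k) \<noteq> i div M ^ (n - k)" using div_pred[OF pos i] by blast
    thus False using kk(2) by simp
  qed
  have cG: "card G = card D" unfolding G_def by (subst card_image) (auto simp: inj_on_def)
  have "card (anc M n i \<union> G) = card (anc M n i) + card G"
    by (rule card_Un_disjoint[OF finite_anc _ disj]) (simp add: G_def D_def)
  thus ?thesis using eq cG card_anc unfolding dd_def D_def by simp
qed

lemma dvd_key:
  fixes M X q r :: nat
  assumes "0 < M" "r < M"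
  shows "(M * X dvd q * M + r) \<longleftrightarrow> (r = 0 \<and> X dvd q)"
proof
  assume h: "M * X dvd q * M + r"
  hence "M dvd q * M + r" using dvd_mult_left by blast
  hence "M dvd r" by (simp add: dvd_add_right_iff)
  hence r0: "r = 0" using assms by (auto dest: dvd_imp_le)
  hence "M * X dvd M * q" using h by (simp add: mult.commute)
  thus "r = 0 \<and> X dvd q" using r0 assms by simp
next
  assume "r = 0 \<and> X dvd q"
  thus "M * X dvd q * M + r" by (simp add: mult.commute)
qed

lemma dd_Suc:
  assumes M: "0 < M" and r: "r < M"
  shows "dd M (Suc n) (q * M + r) = 1 + (if r = 0 then dd M n q else 0)"
proof -
  have "{k\<in>{1..Suc n}. M ^ (Suc n - k) dvd q * M + r}
      = insert (Suc n) (if r = 0 then {k\<in>{1..n}. M ^ (n - k) dvd q} else {})"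
  proof -
    have *: "M ^ (Suc n - k) dvd q * M + r \<longleftrightarrow> (r = 0 \<and> M ^ (n - k) dvd q)" if "k \<in> {1..n}" for k
    proof -
      have "Suc n - k = Suc (n - k)" using that by auto
      hence "M ^ (Suc n - k) = M * M ^ (n - k)" by simp
      thus ?thesis using dvd_key[OF M r] by simp
    qed
    show ?thesis
    proof (rule set_eqI)
      fix k
      show "k \<in> {k\<in>{1..Suc n}. M ^ (Suc n - k) dvd q * M + r} \<longleftrightarrow>
            k \<in> insert (Suc n) (if r = 0 then {k\<in>{1..n}. M ^ (n - k) dvd q} else {})"
      proof (cases "k = Suc n")
        case True thus ?thesis by simp
      next
        case False
        hence kk: "k \<in> {1..Suc n} \<longleftrightarrow> k \<in> {1..n}" by auto
        show ?thesis
        proof (cases "k \<in> {1..n}")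
          case True
          note e = *[OF True]
          show ?thesis using True False kk e by (cases "r = 0") simp_all
        next
          case F2: False
          have "k \<notin> {1..Suc n}" using F2 False by auto
          thus ?thesis using F2 False by auto
        qed
      qed
    qed
  qed
  note e = this
  let ?X = "(if r = 0 then {k\<in>{1..n}. M ^ (n - k) dvd q} else {})"
  have fin: "finite ?X" by auto
  have nin: "Suc n \<notin> ?X" by auto
  have "dd M (Suc n) (q * M + r) = card (insert (Suc n) ?X)" by (simp only: dd_def e)
  also have "\<dots> = Suc (card ?X)" using fin nin by (rule card_insert_disjoint)
  also have "\<dots> = 1 + (if r = 0 then dd M n q else 0)" by (cases "r = 0") (simp_all only: dd_def if_True if_False card.empty, simp_all)
  finally show ?thesis .
qed

lemma dd_zero: "dd M n 0 = n"
proof -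
  have "{k\<in>{1..n}. M ^ (n - k) dvd (0::nat)} = {1..n}" by auto
  thus ?thesis unfolding dd_def by simp
qed

lemma sum_lessThan_add: "(\<Sum>i<c + (b::nat). f i) = (\<Sum>i<c. f i) + (\<Sum>r<b. f (c + r))"
  by (induct b) (simp_all add: add.assoc)

lemma sum_split_mult: "(\<Sum>i<a * (b::nat). f i) = (\<Sum>q<a. \<Sum>r<b. f (q * b + r))"
proof (induct a)
  case 0 thus ?case by simp
next
  case (Suc a)
  have "(\<Sum>i<Suc a * b. f i) = (\<Sum>i<a * b + b. f i)" by (simp add: add.commute)
  also have "\<dots> = (\<Sum>i<a * b. f i) + (\<Sum>r<b. f (a * b + r))" by (rule sum_lessThan_add)
  finally show ?case using Suc by simp
qed

definition FF :: "nat \<Rightarrow> real \<Rightarrow> nat \<Rightarrow> real" where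
  "FF M x n = (\<Sum>i<M ^ n. x ^ dd M n i)"

lemma FF_Suc:
  assumes M: "0 < M"
  shows "FF M x (Suc n) = x * FF M x n + real (M ^ n) * (real M - 1) * x"
proof -
  obtain m where m: "M = Suc m" using M by (cases M) auto
  have "FF M x (Suc n) = (\<Sum>q<M ^ n. \<Sum>r<M. x ^ dd M (Suc n) (q * M + r))"
    unfolding FF_def by (simp add: sum_split_mult power_Suc2 del: power_Suc)
  also have "\<dots> = (\<Sum>q<M ^ n. x * x ^ dd M n q + real m * x)"
  proof (rule sum.cong[OF refl])
    fix q
    have "(\<Sum>r<M. x ^ dd M (Suc n) (q * M + r)) = (\<Sum>r<M. x ^ (1 + (if r = 0 then dd M n q else 0)))"
      using dd_Suc[OF M] by (intro sum.cong) auto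
    also have "\<dots> = x * x ^ dd M n q + real m * x"
      unfolding m by (subst sum.lessThan_Suc_shift) simp
    finally show "(\<Sum>r<M. x ^ dd M (Suc n) (q * M + r)) = x * x ^ dd M n q + real m * x" .
  qed
  also have "\<dots> = x * FF M x n + real (M ^ n) * (real M - 1) * x"
    unfolding FF_def by (simp add: sum.distrib sum_distrib_left m)
  finally show ?thesis .
qed

lemma FF_closed:
  assumes M: "0 < M"
  shows "FF M x n * (real M - x) = x ^ n * (real M - x) + (real M - 1) * x * (real M ^ n - x ^ n)"
proof (induct n)
  case 0 thus ?case by (simp add: FF_def dd_def)
next
  case (Suc n)
  have "FF M x (Suc n) * (real M - x) = x * (FF M x n * (real M - x)) + real M ^ n * (real M - 1) * x * (real M - x)"
    by (simp add: FF_Suc[OF M] algebra_simps)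
  also have "\<dots> = x * (x ^ n * (real M - x) + (real M - 1) * x * (real M ^ n - x ^ n)) + real M ^ n * (real M - 1) * x * (real M - x)"
    by (simp only: Suc)
  also have "\<dots> = x ^ Suc n * (real M - x) + (real M - 1) * x * (real M ^ Suc n - x ^ Suc n)"
    by (simp add: algebra_simps)
  finally show ?case .
qed


lemma space_fp: "space (fp_space p) = UNIV"
  unfolding fp_space_def by (simp add: space_PiM)

lemma prob_fp: "prob_space (fp_space p)"
  unfolding fp_space_def by (rule prob_space_PiM) (simp add: prob_space_measure_pmf)

lemma prob_all:
  assumes A: "finite A" and p: "0 \<le> p" "p \<le> 1"
  shows "{\<omega>. \<forall>a\<in>A. \<omega> a} \<in> sets (fp_space p)"
    and "measure (fp_space p) {\<omega>. \<forall>a\<in>A. \<omega> a} = p ^ card A"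
proof -
  let ?M = "\<lambda>_::nat \<times> nat. measure_pmf (bernoulli_pmf p)"
  have eq: "{\<omega>. \<forall>a\<in>A. \<omega> a} = prod_emb UNIV ?M A (\<Pi>\<^sub>E a\<in>A. {True})"
  proof (rule set_eqI)
    fix \<omega> :: "nat \<times> nat \<Rightarrow> bool"
    have "\<omega> \<in> prod_emb UNIV ?M A (\<Pi>\<^sub>E a\<in>A. {True}) \<longleftrightarrow> restrict \<omega> A \<in> (\<Pi>\<^sub>E a\<in>A. {True})"
      unfolding prod_emb_def space_PiM by simp
    also have "\<dots> \<longleftrightarrow> (\<forall>a\<in>A. \<omega> a)" by (simp only: restrict_PiE_iff) simp
    finally show "\<omega> \<in> {\<omega>. \<forall>a\<in>A. \<omega> a} \<longleftrightarrow> \<omega> \<in> prod_emb UNIV ?M A (\<Pi>\<^sub>E a\<in>A. {True})" by simp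
  qed
  show "{\<omega>. \<forall>a\<in>A. \<omega> a} \<in> sets (fp_space p)"
    unfolding eq fp_space_def by (rule sets_PiM_I) (auto simp: A)
  have "emeasure (fp_space p) {\<omega>. \<forall>a\<in>A. \<omega> a} = (\<Prod>a\<in>A. emeasure (?M a) {True})"
    unfolding eq fp_space_def
    by (rule emeasure_PiM_emb) (auto simp: A prob_space_measure_pmf)
  also have "\<dots> = (\<Prod>a\<in>A. ennreal p)"
    using p by (simp add: emeasure_pmf_single)
  also have "\<dots> = ennreal (p ^ card A)"
    using p by (simp add: prod_ennreal ennreal_power)
  finally show "measure (fp_space p) {\<omega>. \<forall>a\<in>A. \<omega> a} = p ^ card A"
    using p by (simp add: measure_def)
qed

lemma card_filter_sum:
  assumes "finite A"
  shows "real (card {i\<in>A. P i}) = (\<Sum>i\<in>A. if P i then 1 else 0 :: real)"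
proof -
  have "{i\<in>A. P i} = A \<inter> Collect P" by auto
  thus ?thesis using assms by (simp add: sum.If_cases)
qed

theorem proposition4p2:
  fixes M n :: nat and p :: real
  assumes "M \<ge> 2" and "0 \<le> p" and "p \<le> 1"
  shows "(\<integral>\<omega>. V1 (fp_K M \<omega> n) \<partial>fp_space p) = p ^ n
    \<and> (\<integral>\<omega>. V0 (fp_K M \<omega> n) \<partial>fp_space p)
        = (real M * p) ^ n * (1 - (real M - 1) * p / (real M - p) * (1 - (p / real M) ^ n))"
proof -
  have M0: "0 < M" using assms(1) by simp
  define N where "N = M ^ n"
  have cpos: "(0::real) < real M ^ n" using M0 by simp
  have RN: "real N = real M ^ n" unfolding N_def by simp
  interpret P: prob_space "fp_space p" by (rule prob_fp)
  define E where "E i = {\<omega>. \<forall>a\<in>anc M n i. \<omega> a}" for i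
  define F where "F i = {\<omega>. \<forall>a\<in>anc M n i \<union> anc M n (i - 1). \<omega> a}" for i
  have Es: "E i \<in> sets (fp_space p)" for i
    unfolding E_def using prob_all(1)[OF finite_anc assms(2,3)] .
  have Fs: "F i \<in> sets (fp_space p)" for i
    unfolding F_def using prob_all(1)[OF _ assms(2,3)] finite_anc by blast
  have Em: "measure (fp_space p) (E i) = p ^ n" for i
    unfolding E_def using prob_all(2)[OF finite_anc assms(2,3)] card_anc by simp
  have Fm: "measure (fp_space p) (F i) = p ^ (n + dd M n i)" if "1 \<le> i" for i
    unfolding F_def using prob_all(2)[OF _ assms(2,3)] finite_anc card_union_anc[OF M0 that] by simp
  have Eint: "integrable (fp_space p) (indicator (E i) :: _ \<Rightarrow> real)" for i
    using Es by (simp add: integrable_indicator_iff space_fp P.emeasure_finite less_top[symmetric])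
  have Fint: "integrable (fp_space p) (indicator (F i) :: _ \<Rightarrow> real)" for i
    using Fs by (simp add: integrable_indicator_iff space_fp P.emeasure_finite less_top[symmetric])
  define U where "U \<omega> = {i\<in>{..<N}. \<omega> \<in> E i}" for \<omega>
  have KU: "fp_K M \<omega> n = (\<Union>i\<in>U \<omega>. {real i / real M ^ n .. (real i + 1) / real M ^ n})" for \<omega>
    unfolding fp_K_def U_def E_def N_def by (simp add: surv_anc)
  have cardU: "real (card (U \<omega>)) = (\<Sum>i<N. indicator (E i) \<omega>)" for \<omega>
  proof -
    have "real (card (U \<omega>)) = (\<Sum>i<N. if \<omega> \<in> E i then 1 else 0)"
      unfolding U_def by (rule card_filter_sum) simp
    thus ?thesis by (simp only: indicator_def of_bool_def)
  qed
  have V1eq: "V1 (fp_K M \<omega> n) = (\<Sum>i<N. indicator (E i) \<omega>) / real M ^ n" for \<omega>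
    unfolding V1_def KU using meas_union[OF cpos, of "U \<omega>"] cardU[of \<omega>] by (simp add: U_def)
  have V0eq: "V0 (fp_K M \<omega> n) = (\<Sum>i<N. indicator (E i) \<omega>) - (\<Sum>i\<in>{1..<N}. indicator (F i) \<omega>)" for \<omega>
  proof -
    define L where "L = {i\<in>U \<omega>. i = 0 \<or> i - 1 \<notin> U \<omega>}"
    define R where "R = {i\<in>U \<omega>. \<not> (i = 0 \<or> i - 1 \<notin> U \<omega>)}"
    have finU: "finite (U \<omega>)" unfolding U_def by simp
    have "card (U \<omega>) = card L + card R"
    proof -
      have "U \<omega> = L \<union> R" "L \<inter> R = {}" unfolding L_def R_def by auto
      moreover have "finite L" "finite R" using finU unfolding L_def R_def by auto
      ultimately show ?thesis by (simp add: card_Un_disjoint)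
    qed
    moreover have "R = {i\<in>{1..<N}. \<omega> \<in> F i}"
      unfolding R_def U_def F_def E_def by auto
    moreover have "V0 (fp_K M \<omega> n) = real (card L)"
      unfolding V0_def KU L_def using comps_card[OF cpos finU] by simp
    ultimately have "V0 (fp_K M \<omega> n) = real (card (U \<omega>)) - real (card {i\<in>{1..<N}. \<omega> \<in> F i})"
      by simp
    also have "\<dots> = (\<Sum>i<N. indicator (E i) \<omega>) - (\<Sum>i\<in>{1..<N}. indicator (F i) \<omega>)"
    proof -
      have "real (card {i\<in>{1..<N}. \<omega> \<in> F i}) = (\<Sum>i\<in>{1..<N}. if \<omega> \<in> F i then 1 else 0)"
        by (rule card_filter_sum) simp
      thus ?thesis unfolding cardU by (simp only: indicator_def of_bool_def)
    qed
    finally show ?thesis .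
  qed
  have I1: "(\<integral>\<omega>. V1 (fp_K M \<omega> n) \<partial>fp_space p) = p ^ n"
  proof -
    have "(\<integral>\<omega>. V1 (fp_K M \<omega> n) \<partial>fp_space p) = (\<integral>\<omega>. (\<Sum>i<N. indicator (E i) \<omega>) / real M ^ n \<partial>fp_space p)"
      by (simp add: V1eq)
    also have "\<dots> = (\<Sum>i<N. measure (fp_space p) (E i)) / real M ^ n"
      using Eint by (simp add: integral_sum space_fp)
    also have "\<dots> = p ^ n" using Em RN cpos by simp
    finally show ?thesis .
  qed
  have sumF: "(\<Sum>i\<in>{1..<N}. p ^ (n + dd M n i)) = p ^ n * (FF M p n - p ^ n)"
  proof -
    have N1: "0 \<in> {..<N}" unfolding N_def using M0 by simp
    have "FF M p n = p ^ n + (\<Sum>i\<in>{1..<N}. p ^ dd M n i)"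
    proof -
      have "FF M p n = (\<Sum>i<N. p ^ dd M n i)" unfolding FF_def N_def ..
      also have "\<dots> = p ^ dd M n 0 + (\<Sum>i\<in>{..<N} - {0}. p ^ dd M n i)"
        using N1 by (subst sum.remove) auto
      also have "{..<N} - {0} = {1..<N}" by auto
      finally show ?thesis by (simp add: dd_zero)
    qed
    thus ?thesis by (simp add: power_add sum_distrib_left algebra_simps)
  qed
  have I0: "(\<integral>\<omega>. V0 (fp_K M \<omega> n) \<partial>fp_space p) = real N * p ^ n - p ^ n * (FF M p n - p ^ n)"
  proof -
    have "(\<integral>\<omega>. V0 (fp_K M \<omega> n) \<partial>fp_space p)
        = (\<integral>\<omega>. (\<Sum>i<N. indicator (E i) \<omega>) - (\<Sum>i\<in>{1..<N}. indicator (F i) \<omega>) \<partial>fp_space p)"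
      by (simp add: V0eq)
    also have "\<dots> = (\<Sum>i<N. measure (fp_space p) (E i)) - (\<Sum>i\<in>{1..<N}. measure (fp_space p) (F i))"
      using Eint Fint by (simp add: integral_sum space_fp)
    also have "(\<Sum>i\<in>{1..<N}. measure (fp_space p) (F i)) = (\<Sum>i\<in>{1..<N}. p ^ (n + dd M n i))"
      by (rule sum.cong) (auto simp: Fm)
    finally show ?thesis using Em sumF by simp
  qed
  have Mp: "real M - p \<noteq> 0" using assms by linarith
  have FFc: "FF M p n = p ^ n + (real M - 1) * p * (real M ^ n - p ^ n) / (real M - p)"
    using FF_closed[OF M0, of p n] Mp by (simp add: field_simps)
  have Mn: "real M ^ n \<noteq> 0" using cpos by simp
  have "real N * p ^ n - p ^ n * (FF M p n - p ^ n)
      = (real M * p) ^ n * (1 - (real M - 1) * p / (real M - p) * (1 - (p / real M) ^ n))"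
    unfolding FFc RN using Mp Mn M0
    by (simp add: field_simps power_mult_distrib power_divide)
  thus ?thesis using I1 I0 by simp
qed

end
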